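(* Let $D$ be a digraph with at least one cycle, with girth $g$ and circumference $c$, such that $g-1\le c-g+2$ (i.e. $g\le \frac{c+3}{2}$). Then $\chi_A(D)\le c-g+2$.
   Context: Digraphs are finite and loopless; cycles are directed. The girth (resp. circumference) is the length of a shortest (resp. longest) directed cycle. $\chi_A(D)$ is the minimum number of colors in a vertex coloring of $D$ in which every color class induces an acyclic subdigraph. *)

theory Defs
  imports Main
begin

text \<open>A digraph is given by a finite vertex set V and an arc relation A \<subseteq> V \<times> V
  without loops (parallel arcs are irrelevant for all notions involved).\<close>

definition digraph :: "'a set \<Rightarrow> ('a \<times> 'a) set \<Rightarrow> bool" where
  "digraph V A \<longleftrightarrow> finite V \<and> A \<subseteq> V \<times> V \<and> (\<forall>v. (v, v) \<notin> A)"

definition is_cycle :: "('a \<times> 'a) set \<Rightarrow> 'a list \<Rightarrow> bool" where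
  "is_cycle A xs \<longleftrightarrow> xs \<noteq> [] \<and> distinct xs \<and>
     (\<forall>i < length xs. (xs ! i, xs ! ((i + 1) mod length xs)) \<in> A)"

definition cycle_lengths :: "('a \<times> 'a) set \<Rightarrow> nat set" where
  "cycle_lengths A = {length xs | xs. is_cycle A xs}"

definition girth :: "('a \<times> 'a) set \<Rightarrow> nat" where
  "girth A = Min (cycle_lengths A)"

definition circumference :: "('a \<times> 'a) set \<Rightarrow> nat" where
  "circumference A = Max (cycle_lengths A)"

definition acyclic_coloring :: "'a set \<Rightarrow> ('a \<times> 'a) set \<Rightarrow> ('a \<Rightarrow> nat) \<Rightarrow> nat \<Rightarrow> bool" where
  "acyclic_coloring V A f k \<longleftrightarrow> (\<forall>v\<in>V. f v < k) \<and>
     (\<forall>i. \<not> (\<exists>xs. is_cycle (A \<inter> ({v\<in>V. f v = i} \<times> {v\<in>V. f v = i})) xs))"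

definition dichromatic_number :: "'a set \<Rightarrow> ('a \<times> 'a) set \<Rightarrow> nat" where
  "dichromatic_number V A = (LEAST k. \<exists>f. acyclic_coloring V A f k)"

end

theory Submission
  imports Defs
begin

lemma drop_cycle:
  assumes "distinct p" "\<forall>i. Suc i < length p \<longrightarrow> (p!i, p!Suc i) \<in> A"
    "i < length p" "(last p, p!i) \<in> A"
  shows "is_cycle A (drop i p)"
  unfolding is_cycle_def
proof (intro conjI allI impI)
  show "drop i p \<noteq> []" using assms(3) by simp
  show "distinct (drop i p)" using assms(1) by simp
  fix j assume j: "j < length (drop i p)"
  show "(drop i p ! j, drop i p ! ((j + 1) mod length (drop i p))) \<in> A"
  proof (cases "j + 1 < length (drop i p)")
    case True
    then show ?thesis using assms(2) j by simp
  next
    case False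
    then have "j + 1 = length (drop i p)" using j by simp
    then have "(j+1) mod length (drop i p) = 0" by simp
    moreover have "drop i p ! j = last p"
    proof -
      have "i + j = length p - 1" using \<open>j + 1 = length (drop i p)\<close> assms(3) by simp
      moreover have "p \<noteq> []" using assms(3) by auto
      ultimately show ?thesis by (simp add: last_conv_nth)
    qed
    ultimately show ?thesis using assms(3,4) by simp
  qed
qed

lemma dfs_label:
  assumes fin: "finite U" and nl: "\<forall>v. (v,v) \<notin> A"
    and "distinct \<pi>" "set \<pi> \<subseteq> U" "\<forall>i. Suc i < length \<pi> \<longrightarrow> (\<pi>!i, \<pi>!Suc i) \<in> A"
  shows "\<exists>d f. (\<forall>i<length \<pi>. d (\<pi>!i) = (i::nat)) \<and>
    (\<forall>u\<in>U. \<forall>v\<in>U. (u,v)\<in>A \<longrightarrow> f v < (f u::nat) \<or> (d v < d u \<and> d u - d v + 1 \<in> cycle_lengths A))"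
  using assms
proof (induction "2 * card U - length \<pi>" arbitrary: U \<pi> rule: less_induct)
  case less
  have lenle: "length \<pi> \<le> card U"
    using distinct_card[OF less.prems(3)] card_mono[OF less.prems(1,4)] by simp
  show ?case
  proof (cases "\<pi> = []")
    case True
    show ?thesis
    proof (cases "U = {}")
      case True
      then show ?thesis using \<open>\<pi> = []\<close> by auto
    next
      case False
      then obtain r where r: "r \<in> U" by auto
      have "card U > 0" using False less.prems(1) by (simp add: card_gt_0_iff)
      then have "2 * card U - length [r] < 2 * card U - length \<pi>" using True by simp
      from less.hyps[OF this less.prems(1,2)] r obtain d f where
        "\<forall>u\<in>U. \<forall>v\<in>U. (u,v)\<in>A \<longrightarrow> f v < (f u::nat) \<or> (d v < d u \<and> d u - d v + 1 \<in> cycle_lengths A)"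
        by auto
      then show ?thesis using True by auto
    qed
  next
    case False
    show ?thesis
    proof (cases "\<exists>y\<in>U. y \<notin> set \<pi> \<and> (last \<pi>, y) \<in> A")
      case True
      then obtain y where y: "y \<in> U" "y \<notin> set \<pi>" "(last \<pi>, y) \<in> A" by auto
      have "2 * card U - length (\<pi> @ [y]) < 2 * card U - length \<pi>"
      proof -
        have "length (\<pi>@[y]) \<le> card U"
          using distinct_card[of "\<pi>@[y]"] card_mono[OF less.prems(1), of "set (\<pi>@[y])"]
            less.prems(3,4) y by simp
        then show ?thesis by simp
      qed
      moreover have "distinct (\<pi>@[y])" using less.prems(3) y by simp
      moreover have "set (\<pi>@[y]) \<subseteq> U" using less.prems(4) y by simp
      moreover have "\<forall>i. Suc i < length (\<pi>@[y]) \<longrightarrow> ((\<pi>@[y])!i, (\<pi>@[y])!Suc i) \<in> A"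
      proof (intro allI impI)
        fix i assume i: "Suc i < length (\<pi>@[y])"
        show "((\<pi>@[y])!i, (\<pi>@[y])!Suc i) \<in> A"
        proof (cases "Suc i < length \<pi>")
          case True then show ?thesis using less.prems(5) by (simp add: nth_append)
        next
          case False
          then have "i = length \<pi> - 1" using i by simp
          then show ?thesis using y(3) False \<open>\<pi> \<noteq> []\<close>
            by (simp add: nth_append last_conv_nth)
        qed
      qed
      ultimately obtain d f where df: "\<forall>i<length (\<pi>@[y]). d ((\<pi>@[y])!i) = (i::nat)"
        "\<forall>u\<in>U. \<forall>v\<in>U. (u,v)\<in>A \<longrightarrow> f v < (f u::nat) \<or> (d v < d u \<and> d u - d v + 1 \<in> cycle_lengths A)"
        using less.hyps[of U "\<pi>@[y]"] less.prems(1,2) by blast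
      have "\<forall>i<length \<pi>. d (\<pi>!i) = i"
      proof (intro allI impI)
        fix i assume "i < length \<pi>"
        then show "d (\<pi>!i) = i" using df(1)[rule_format, of i] by (simp add: nth_append)
      qed
      then show ?thesis using df(2) by blast
    next
      case noext: False
      define x where "x = last \<pi>"
      define t where "t = length \<pi> - 1"
      define \<pi>' where "\<pi>' = butlast \<pi>"
      have pi_eq: "\<pi> = \<pi>' @ [x]" using False unfolding x_def \<pi>'_def by simp
      have xU: "x \<in> U" using less.prems(4) pi_eq by auto
      have xn: "x \<notin> set \<pi>'" using less.prems(3) pi_eq by simp
      have lt: "length \<pi>' = t" unfolding t_def \<pi>'_def by simp
      have "card U > 0" using xU less.prems(1) by (auto simp: card_gt_0_iff)
      then have meas: "2 * card (U - {x}) - length \<pi>' < 2 * card U - length \<pi>"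
        using lenle xU less.prems(1) pi_eq by simp
      have d1: "distinct \<pi>'" using less.prems(3) pi_eq by simp
      have s1: "set \<pi>' \<subseteq> U - {x}" using less.prems(4) pi_eq xn by auto
      have p1: "\<forall>i. Suc i < length \<pi>' \<longrightarrow> (\<pi>'!i, \<pi>'!Suc i) \<in> A"
      proof (intro allI impI)
        fix i assume i: "Suc i < length \<pi>'"
        then have "Suc i < length \<pi>" using pi_eq by simp
        then have "(\<pi>!i, \<pi>!Suc i) \<in> A" using less.prems(5) by blast
        then show "(\<pi>'!i, \<pi>'!Suc i) \<in> A" using i pi_eq by (simp add: nth_append)
      qed
      obtain d' f' where df: "\<forall>i<length \<pi>'. d' (\<pi>'!i) = (i::nat)"
        "\<forall>u\<in>U-{x}. \<forall>v\<in>U-{x}. (u,v)\<in>A \<longrightarrow> f' v < (f' u::nat) \<or> (d' v < d' u \<and> d' u - d' v + 1 \<in> cycle_lengths A)"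
        using less.hyps[OF meas _ less.prems(2) d1 s1 p1] less.prems(1) by blast
      define d where "d = d'(x := t)"
      define f where "f = (\<lambda>z. Suc (f' z))(x := 0)"
      have P1: "\<forall>i<length \<pi>. d (\<pi>!i) = i"
      proof (intro allI impI)
        fix i assume i: "i < length \<pi>"
        show "d (\<pi>!i) = i"
        proof (cases "i = t")
          case True
          then have "\<pi>!i = x" using pi_eq lt by (simp add: nth_append)
          then show ?thesis using True by (simp add: d_def)
        next
          case False
          then have it: "i < t" using i pi_eq lt by simp
          then have "\<pi>!i = \<pi>'!i" using pi_eq lt by (simp add: nth_append)
          moreover have "\<pi>'!i \<noteq> x" using xn it lt by auto
          ultimately show ?thesis using df(1) it lt by (simp add: d_def)
        qed
      qed
      have P2: "\<forall>u\<in>U. \<forall>v\<in>U. (u,v)\<in>A \<longrightarrow> f v < f u \<or> (d v < d u \<and> d u - d v + 1 \<in> cycle_lengths A)"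
      proof (intro ballI impI)
        fix u v assume u: "u \<in> U" and v: "v \<in> U" and uv: "(u,v) \<in> A"
        show "f v < f u \<or> (d v < d u \<and> d u - d v + 1 \<in> cycle_lengths A)"
        proof (cases "u = x")
          case True
          have vx: "v \<noteq> x" using True uv less.prems(2) by auto
          have "v \<in> set \<pi>" using noext v uv True x_def by auto
          then obtain i where i: "i < length \<pi>" "\<pi>!i = v" by (auto simp: in_set_conv_nth)
          have "i \<noteq> t" using i vx pi_eq lt by (auto simp: nth_append)
          then have it: "i < t" using i pi_eq lt by simp
          have dv: "d v = i" using P1 i by auto
          have du: "d u = t" using True by (simp add: d_def)
          have "is_cycle A (drop i \<pi>)"
            using drop_cycle[OF less.prems(3,5) i(1)] uv True x_def i(2) by simp
          moreover have "length (drop i \<pi>) = t - i + 1" using it pi_eq lt by simp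
          ultimately have "t - i + 1 \<in> cycle_lengths A" unfolding cycle_lengths_def
            by (intro CollectI exI[of _ "drop i \<pi>"]) simp
          then show ?thesis using dv du it by simp
        next
          case False
          show ?thesis
          proof (cases "v = x")
            case True then show ?thesis using False by (simp add: f_def)
          next
            case vx: False
            then show ?thesis using df(2) u v uv False by (simp add: f_def d_def)
          qed
        qed
      qed
      show ?thesis using P1 P2 by blast
    qed
  qed
qed

lemma color_arith:
  fixes a b m k N :: nat
  assumes "m \<ge> 1" "N \<ge> m" "k = N - m + 2" "b \<le> a" "m \<le> a - b" "a - b \<le> N"
  shows "(a div m) mod k \<noteq> (b div m) mod k"
proof
  assume eq: "(a div m) mod k = (b div m) mod k"
  have "b div m < a div m"
  proof -
    have "b + m \<le> a" using assms by simp
    then have "(b + m) div m \<le> a div m" by (rule div_le_mono)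
    moreover have "(b + m) div m = b div m + 1" using assms(1) by (simp add: div_add_self2)
    ultimately show ?thesis by simp
  qed
  define D where "D = a div m - b div m"
  have D1: "D \<ge> 1" using \<open>b div m < a div m\<close> D_def by simp
  have "D * m < N + m"
  proof -
    have "(a div m) * m \<le> a" by (simp add: div_times_less_eq_dividend)
    moreover have "b < b div m * m + m"
    proof -
      have "b mod m < m" using assms(1) by simp
      moreover have "b div m * m + b mod m = b" by (rule div_mult_mod_eq)
      ultimately show ?thesis by linarith
    qed
    ultimately have "(a div m) * m < a - b + (b div m) * m + m"
      using assms(4) by linarith
    then have "(a div m - b div m) * m < a - b + m"
      using mult_le_mono1[of "b div m" "a div m" m] \<open>b div m < a div m\<close>
      by (simp only: diff_mult_distrib) linarith
    then show ?thesis using assms(6) D_def by simp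
  qed
  have Dk: "D < k"
  proof (rule ccontr)
    assume "\<not> D < k"
    then have "k * m \<le> D * m" by (simp add: mult_le_mono1)
    moreover have "k * m \<ge> N + m"
    proof -
      have "k \<ge> 2" using assms by simp
      then obtain k' where k': "k = k' + 2" by (metis le_add_diff_inverse2)
      obtain m' where m': "m = m' + 1" using assms(1) by (metis le_add_diff_inverse2)
      have "k * m = k' * m' + k' + 2 * m' + 2" using k' m' by (simp add: algebra_simps)
      then have "k * m \<ge> k + 2 * m - 2" using k' m' by simp
      then show ?thesis using assms by simp
    qed
    ultimately show False using \<open>D * m < N + m\<close> by linarith
  qed
  have "k dvd D" using eq D_def \<open>b div m < a div m\<close>
    by (metis less_or_eq_imp_le mod_eq_dvd_iff_nat)
  then show False using D1 Dk by (auto dest: dvd_imp_le)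
qed

lemma cycle_set: "digraph V A \<Longrightarrow> is_cycle A xs \<Longrightarrow> set xs \<subseteq> V"
proof
  fix x assume dg: "digraph V A" and c: "is_cycle A xs" and x: "x \<in> set xs"
  then obtain j where j: "j < length xs" "xs!j = x" by (auto simp: in_set_conv_nth)
  then have "(x, xs!((j+1) mod length xs)) \<in> A" using c unfolding is_cycle_def by auto
  then show "x \<in> V" using dg unfolding digraph_def by auto
qed

theorem mainTheorem11:
  fixes V :: "'a set" and A :: "('a \<times> 'a) set"
  assumes "digraph V A"
    and "\<exists>xs. is_cycle A xs"
    and "girth A - 1 \<le> circumference A - girth A + 2"
  shows "dichromatic_number V A \<le> circumference A - girth A + 2"
proof -
  have finV: "finite V" and AV: "A \<subseteq> V \<times> V" and nl: "\<forall>v. (v,v) \<notin> A"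
    using assms(1) unfolding digraph_def by auto
  obtain d f where df: "\<forall>u\<in>V. \<forall>v\<in>V. (u,v)\<in>A \<longrightarrow> f v < (f u::nat) \<or> (d v < d u \<and> d u - d v + 1 \<in> cycle_lengths A)"
    using dfs_label[OF finV nl, of "[]"] by auto
  define g where "g = girth A"
  define c where "c = circumference A"
  have finC: "finite (cycle_lengths A)"
  proof (rule finite_subset)
    show "cycle_lengths A \<subseteq> {..card V}"
    proof
      fix n assume "n \<in> cycle_lengths A"
      then obtain xs where "n = length xs" "is_cycle A xs" unfolding cycle_lengths_def by auto
      moreover have "length xs \<le> card V"
        using cycle_set[OF assms(1) \<open>is_cycle A xs\<close>] \<open>is_cycle A xs\<close> finV
        by (metis card_mono distinct_card is_cycle_def)
      ultimately show "n \<in> {..card V}" by simp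
    qed
  qed simp
  have neC: "cycle_lengths A \<noteq> {}" using assms(2) unfolding cycle_lengths_def by auto
  have ge2: "\<forall>n\<in>cycle_lengths A. n \<ge> 2"
  proof
    fix n assume "n \<in> cycle_lengths A"
    then obtain xs where xs: "n = length xs" "is_cycle A xs" unfolding cycle_lengths_def by auto
    show "n \<ge> 2"
    proof (rule ccontr)
      assume "\<not> n \<ge> 2"
      moreover have "length xs \<noteq> 0" using xs unfolding is_cycle_def by simp
      ultimately have "length xs = 1" using xs(1) by linarith
      then have "(xs!0, xs!0) \<in> A" using xs(2) unfolding is_cycle_def by fastforce
      then show False using nl by auto
    qed
  qed
  have g2: "g \<ge> 2" using ge2 finC neC unfolding g_def girth_def by simp
  have bounds: "\<And>n. n \<in> cycle_lengths A \<Longrightarrow> g \<le> n \<and> n \<le> c"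
    using finC unfolding g_def c_def girth_def circumference_def by simp
  have gc: "g \<le> c" using bounds neC by force
  define m where "m = g - 1"
  define k where "k = c - g + 2"
  define col where "col v = (d v div m) mod k" for v
  have "acyclic_coloring V A col k"
    unfolding acyclic_coloring_def
  proof (intro conjI ballI allI notI)
    fix v show "col v < k" unfolding col_def k_def by simp
  next
    fix i assume "\<exists>xs. is_cycle (A \<inter> ({v\<in>V. col v = i} \<times> {v\<in>V. col v = i})) xs"
    then obtain xs where xs: "is_cycle (A \<inter> ({v\<in>V. col v = i} \<times> {v\<in>V. col v = i})) xs" by blast
    have ne: "xs \<noteq> []" using xs unfolding is_cycle_def by simp
    define M where "M = Min (f ` set xs)"
    have "M \<in> f ` set xs" unfolding M_def using ne by simp
    then obtain u where u: "u \<in> set xs" "f u = M" by auto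
    then obtain j where j: "j < length xs" "xs!j = u" by (auto simp: in_set_conv_nth)
    define v where "v = xs!((j+1) mod length xs)"
    have arc: "(u, v) \<in> A \<inter> ({v\<in>V. col v = i} \<times> {v\<in>V. col v = i})"
      using xs j unfolding is_cycle_def v_def by blast
    have "v \<in> set xs" unfolding v_def using ne by simp
    then have "f u \<le> f v" using u unfolding M_def by simp
    then have "d v < d u \<and> d u - d v + 1 \<in> cycle_lengths A"
    proof -
      have "u \<in> V" "v \<in> V" "(u,v) \<in> A" using arc by auto
      then have "f v < f u \<or> (d v < d u \<and> d u - d v + 1 \<in> cycle_lengths A)" using df by blast
      then show ?thesis using \<open>f u \<le> f v\<close> by linarith
    qed
    then have dd: "d v < d u" "g \<le> d u - d v + 1" "d u - d v + 1 \<le> c" using bounds by auto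
    have "col u \<noteq> col v" unfolding col_def
      by (rule color_arith[where N = "c - 1"]) (use dd g2 gc in \<open>auto simp: m_def k_def\<close>)
    then show False using arc by auto
  qed
  then have "dichromatic_number V A \<le> k" unfolding dichromatic_number_def
    by (intro Least_le) blast
  then show ?thesis unfolding k_def c_def g_def .
qed

end
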